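(* Consider the following encoder-assisted communication system over the additive white Gaussian noise (AWGN) channel. The channel is $Y_i = X_i + Z_i$, $i=1,\dots,n$, where $Z_1,\dots,Z_n$ are i.i.d. $\mathcal{N}(0,\sigma^2)$, $\sigma^2>0$. A helper observes the whole noise realization $z^n=(z_1,\dots,z_n)$ (non-causally) and sends to the encoder the index $T(z^n)$, where $T:\mathbb{R}^n\to\{0,1,\dots,e^{nR_{\mathrm{h}}}-1\}$, $R_{\mathrm{h}}\in(0,\infty)$ (help rate, in nats). The message $m$ is uniformly distributed on $\mathcal{M}=\{0,1,\dots,e^{nR}-1\}$ and independent of $Z^n$; the encoder sends $x^n=\phi(m,T(z^n))\in\mathbb{R}^n$, subject to the power constraint $\sum_{i=1}^n \mathbb{E}\{([\phi(m,T(Z^n))]_i)^2\}\le nP$, the expectation being over both $m$ and $Z^n$. The decoder $\psi:\mathbb{R}^n\to\mathcal{M}$ outputs $\hat m=\psi(y^n)$, and the error probability is $P_{\mathrm{e}}(\phi,\psi,T)=\Pr\{\psi(\phi(m,T(Z^n))+Z^n)\neq m\}$. The reliability function is $$E(R)=\limsup_{n\to\infty}\left\{-\frac{1}{n}\log\Big[\inf_{\phi,\psi,T}P_{\mathrm{e}}(\phi,\psi,T)\Big]\right\},$$ the infimum being over all rate-$R$ encoders, their decoders, and rate-$R_{\mathrm{h}}$ helpers. Let $C_0=\frac12\log(1+P/\sigma^2)$ and let $E_{\mathrm{a}}(\cdot)$ be any achievable error exponent function for the same AWGN channel with power $P$ and without help. Then $$E(R)\ge\begin{cases}\infty & R<R_{\mathrm{h}},\\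 E_{\mathrm{a}}(R-R_{\mathrm{h}}) & R_{\mathrm{h}}<R<R_{\mathrm{h}}+C_0,\\ 0 & R\ge R_{\mathrm{h}}+C_0,\end{cases}$$ where the assertion $E(R)\ge\infty$ for $R<R_{\mathrm{h}}$ means that an arbitrarily large error exponent is achievable (i.e., for every $B<\infty$ there exist such schemes whose error probability decays with exponent at least $B$).
   Context: Logarithms are natural (rates in nats per channel use). "An achievable error exponent function $E_{\mathrm{a}}(\cdot)$ for the AWGN channel without help" means a function such that, for each rate $r$, there exist ordinary channel codes (encoder depending only on the message, satisfying the same power constraint $P$) of rate $r$ and decoders whose error probability over $\mathcal{N}(0,\sigma^2)$ i.i.d. noise is at most $e^{-n[E_{\mathrm{a}}(r)-o(1)]}$ as $n\to\infty$ (examples: the random coding exponent or the expurgated exponent of the AWGN channel). *)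

theory Defs
  imports "HOL-Probability.Probability"
begin

text \<open>Noise: n i.i.d. N(0, s2) samples (s2 = variance), vectors of length n are
  functions nat => real on the index set {..<n} (product measure PiM).\<close>

definition noise_measure :: "nat \<Rightarrow> real \<Rightarrow> (nat \<Rightarrow> real) measure" where
  "noise_measure n s2 = PiM {..<n} (\<lambda>_. density lborel (normal_density 0 (sqrt s2)))"

definition vec_space :: "nat \<Rightarrow> (nat \<Rightarrow> real) measure" where
  "vec_space n = PiM {..<n} (\<lambda>_. (borel :: real measure))"

definition set_size :: "nat \<Rightarrow> real \<Rightarrow> nat" where
  "set_size n R = nat \<lceil>exp (real n * R)\<rceil>"

definition received :: "nat \<Rightarrow> (nat \<Rightarrow> real) \<Rightarrow> (nat \<Rightarrow> real) \<Rightarrow> (nat \<Rightarrow> real)" where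
  "received n x z = (\<lambda>i\<in>{..<n}. x i + z i)"

definition helped_code ::
  "nat \<Rightarrow> real \<Rightarrow> real \<Rightarrow> real \<Rightarrow> real \<Rightarrow> (nat \<Rightarrow> nat \<Rightarrow> nat \<Rightarrow> real)
    \<Rightarrow> ((nat \<Rightarrow> real) \<Rightarrow> nat) \<Rightarrow> ((nat \<Rightarrow> real) \<Rightarrow> nat) \<Rightarrow> bool" where
  "helped_code n R Rh P s2 \<phi> \<psi> T \<longleftrightarrow>
     T \<in> measurable (noise_measure n s2) (count_space UNIV) \<and>
     (\<forall>z\<in>space (noise_measure n s2). T z < set_size n Rh) \<and>
     \<psi> \<in> measurable (vec_space n) (count_space UNIV) \<and>
     (\<forall>y. \<psi> y < set_size n R) \<and>
     (1 / real (set_size n R)) * (\<Sum>m<set_size n R.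
        integral\<^sup>L (noise_measure n s2) (\<lambda>z. \<Sum>i<n. (\<phi> m (T z) i)\<^sup>2)) \<le> real n * P"

definition helped_error ::
  "nat \<Rightarrow> real \<Rightarrow> real \<Rightarrow> (nat \<Rightarrow> nat \<Rightarrow> nat \<Rightarrow> real)
    \<Rightarrow> ((nat \<Rightarrow> real) \<Rightarrow> nat) \<Rightarrow> ((nat \<Rightarrow> real) \<Rightarrow> nat) \<Rightarrow> real" where
  "helped_error n R s2 \<phi> \<psi> T =
     (1 / real (set_size n R)) * (\<Sum>m<set_size n R.
        measure (noise_measure n s2)
          {z \<in> space (noise_measure n s2). \<psi> (received n (\<phi> m (T z)) z) \<noteq> m})"

definition opt_helped_error :: "nat \<Rightarrow> real \<Rightarrow> real \<Rightarrow> real \<Rightarrow> real \<Rightarrow> real" where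
  "opt_helped_error n R Rh P s2 =
     Inf ((\<lambda>(\<phi>, \<psi>, T). helped_error n R s2 \<phi> \<psi> T) `
          {(\<phi>, \<psi>, T). helped_code n R Rh P s2 \<phi> \<psi> T})"

definition reliability :: "real \<Rightarrow> real \<Rightarrow> real \<Rightarrow> real \<Rightarrow> ereal" where
  "reliability R Rh P s2 = limsup (\<lambda>n.
      if opt_helped_error n R Rh P s2 = 0 then \<infinity>
      else ereal (- ln (opt_helped_error n R Rh P s2) / real n))"

definition plain_code ::
  "nat \<Rightarrow> real \<Rightarrow> real \<Rightarrow> (nat \<Rightarrow> nat \<Rightarrow> real) \<Rightarrow> ((nat \<Rightarrow> real) \<Rightarrow> nat) \<Rightarrow> bool" where
  "plain_code n r P f \<psi> \<longleftrightarrow>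
     \<psi> \<in> measurable (vec_space n) (count_space UNIV) \<and>
     (\<forall>y. \<psi> y < set_size n r) \<and>
     (1 / real (set_size n r)) * (\<Sum>m<set_size n r. \<Sum>i<n. (f m i)\<^sup>2) \<le> real n * P"

definition plain_error ::
  "nat \<Rightarrow> real \<Rightarrow> real \<Rightarrow> (nat \<Rightarrow> nat \<Rightarrow> real) \<Rightarrow> ((nat \<Rightarrow> real) \<Rightarrow> nat) \<Rightarrow> real" where
  "plain_error n r s2 f \<psi> =
     (1 / real (set_size n r)) * (\<Sum>m<set_size n r.
        measure (noise_measure n s2)
          {z \<in> space (noise_measure n s2). \<psi> (received n (f m) z) \<noteq> m})"

definition achievable_exponent :: "real \<Rightarrow> real \<Rightarrow> (real \<Rightarrow> real) \<Rightarrow> bool" where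
  "achievable_exponent P s2 Ea \<longleftrightarrow>
     (\<forall>r. \<exists>\<epsilon> :: nat \<Rightarrow> real. \<epsilon> \<longlonglongrightarrow> 0 \<and>
        (\<forall>n. \<exists>f \<psi>. plain_code n r P f \<psi> \<and>
               plain_error n r s2 f \<psi> \<le> exp (- real n * (Ea r - \<epsilon> n))))"

definition awgn_capacity :: "real \<Rightarrow> real \<Rightarrow> real" where
  "awgn_capacity P s2 = ln (1 + P / s2) / 2"

end

theory Submission
  imports Defs
begin

lemma nd_le: assumes "(\<sigma>::real) > 0" shows "normal_density 0 \<sigma> x \<le> 1/\<sigma>"
proof -
  have "exp (-(x - 0)\<^sup>2/ (2 * \<sigma>\<^sup>2)) \<le> 1" by simp
  moreover have "\<sigma> \<le> sqrt (2 * pi * \<sigma>\<^sup>2)"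
  proof -
    have "sqrt (2 * pi * \<sigma>\<^sup>2) = sqrt (2*pi) * \<sigma>" using assms by (simp add: real_sqrt_mult)
    moreover have "1 \<le> sqrt (2*pi)" using pi_gt3 by simp
    ultimately show ?thesis using assms by (simp add: mult_le_cancel_right1)
  qed
  ultimately have "1 / sqrt (2 * pi * \<sigma>\<^sup>2) * exp (-(x - 0)\<^sup>2/ (2 * \<sigma>\<^sup>2)) \<le> 1 / \<sigma> * 1"
    using assms by (intro mult_mono) (auto simp: divide_simps)
  then show ?thesis by (simp add: normal_density_def)
qed

lemma nd_mono: assumes "(\<sigma>::real) > 0" "\<bar>a\<bar> \<le> \<bar>b\<bar>" shows "normal_density 0 \<sigma> b \<le> normal_density 0 \<sigma> a"
proof -
  have "a\<^sup>2 \<le> b\<^sup>2" using assms(2) by (metis abs_le_square_iff)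
  then have "-(b - 0)\<^sup>2/ (2 * \<sigma>\<^sup>2) \<le> -(a - 0)\<^sup>2/ (2 * \<sigma>\<^sup>2)" using assms(1) by (simp add: divide_right_mono)
  then show ?thesis unfolding normal_density_def by (intro mult_left_mono) (use assms(1) in auto)
qed

lemma nd_even: "normal_density 0 \<sigma> (-x) = normal_density 0 \<sigma> x"
  by (simp add: normal_density_def)

lemma nd_total: assumes "(\<sigma>::real) > 0" shows "(\<integral>\<^sup>+x. ennreal (normal_density 0 \<sigma> x) \<partial>lborel) = 1"
proof -
  interpret prob_space "density lborel (normal_density 0 \<sigma>)" using prob_space_normal_density[OF assms] .
  have "emeasure (density lborel (normal_density 0 \<sigma>)) UNIV = 1" using emeasure_space_1 by simp
  then show ?thesis by (simp add: emeasure_density)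
qed

lemma shift_core:
  fixes \<sigma> \<delta> :: real and H :: "real \<Rightarrow> ennreal"
  assumes s: "\<sigma> > 0" and d: "\<delta> \<ge> 0" and H[measurable]: "H \<in> borel_measurable borel"
    and H1: "\<And>u. H u \<le> 1"
  shows "(\<integral>\<^sup>+u. ennreal (normal_density 0 \<sigma> (u - \<delta>)) * H u \<partial>lborel)
     \<le> (\<integral>\<^sup>+u. ennreal (normal_density 0 \<sigma> u) * H u \<partial>lborel) + ennreal (\<delta> / \<sigma>)"
proof -
  define \<phi> where "\<phi> = normal_density 0 \<sigma>"
  have [measurable]: "\<phi> \<in> borel_measurable borel" unfolding \<phi>_def by simp
  define D where "D u = ennreal (\<phi> (u - \<delta>) - \<phi> u)" for u
  have [measurable]: "D \<in> borel_measurable borel" unfolding D_def by measurable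
  have pw: "ennreal (\<phi> (u - \<delta>)) * H u \<le> ennreal (\<phi> u) * H u + indicator {\<delta>/2<..} u * D u" for u
  proof (cases "u > \<delta>/2")
    case True
    have ge: "\<phi> u \<le> \<phi> (u - \<delta>)" unfolding \<phi>_def using True d by (intro nd_mono s) auto
    have "ennreal (\<phi> (u - \<delta>)) = ennreal (\<phi> u) + D u"
      unfolding D_def using ge by (simp add: \<phi>_def ennreal_plus[symmetric] del: ennreal_plus)
    then have "ennreal (\<phi> (u - \<delta>)) * H u = ennreal (\<phi> u) * H u + D u * H u"
      by (simp add: distrib_right)
    also have "\<dots> \<le> ennreal (\<phi> u) * H u + D u"
      using mult_left_mono[OF H1[of u], of "D u"] by (intro add_left_mono) simp
    finally show ?thesis using True by simp
  next
    case False
    have "\<phi> (u - \<delta>) \<le> \<phi> u" unfolding \<phi>_def using False d by (intro nd_mono s) auto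
    then have "ennreal (\<phi> (u - \<delta>)) * H u \<le> ennreal (\<phi> u) * H u"
      by (intro mult_right_mono) (auto intro: ennreal_leI)
    then show ?thesis by (simp add: add_increasing2)
  qed
  have step1: "(\<integral>\<^sup>+u. ennreal (\<phi> (u - \<delta>)) * H u \<partial>lborel)
     \<le> (\<integral>\<^sup>+u. ennreal (\<phi> u) * H u \<partial>lborel) + (\<integral>\<^sup>+u. indicator {\<delta>/2<..} u * D u \<partial>lborel)"
  proof -
    have "(\<integral>\<^sup>+u. ennreal (\<phi> (u - \<delta>)) * H u \<partial>lborel) \<le> (\<integral>\<^sup>+u. ennreal (\<phi> u) * H u + indicator {\<delta>/2<..} u * D u \<partial>lborel)"
      by (rule nn_integral_mono) (rule pw)
    also have "\<dots> = (\<integral>\<^sup>+u. ennreal (\<phi> u) * H u \<partial>lborel) + (\<integral>\<^sup>+u. indicator {\<delta>/2<..} u * D u \<partial>lborel)"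
      by (rule nn_integral_add) measurable
    finally show ?thesis .
  qed
  define a where "a = (\<integral>\<^sup>+u. indicator {\<delta>/2<..} u * ennreal (\<phi> u) \<partial>lborel)"
  define X where "X = (\<integral>\<^sup>+u. indicator {\<delta>/2<..} u * D u \<partial>lborel)"
  define Y where "Y = (\<integral>\<^sup>+u. indicator {-\<delta>/2<..\<delta>/2} u * ennreal (\<phi> u) \<partial>lborel)"
  have A: "(\<integral>\<^sup>+u. indicator {\<delta>/2<..} u * ennreal (\<phi> (u - \<delta>)) \<partial>lborel) = a + X"
  proof -
    have "indicator {\<delta>/2<..} u * ennreal (\<phi> (u - \<delta>)) = indicator {\<delta>/2<..} u * ennreal (\<phi> u) + indicator {\<delta>/2<..} u * D u" for u
    proof (cases "u > \<delta>/2")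
      case True
      have ge: "\<phi> u \<le> \<phi> (u - \<delta>)" unfolding \<phi>_def using True d by (intro nd_mono s) auto
      then show ?thesis using True unfolding D_def by (simp add: \<phi>_def ennreal_plus[symmetric] del: ennreal_plus)
    qed simp
    then have "(\<integral>\<^sup>+u. indicator {\<delta>/2<..} u * ennreal (\<phi> (u - \<delta>)) \<partial>lborel) = (\<integral>\<^sup>+u. indicator {\<delta>/2<..} u * ennreal (\<phi> u) + indicator {\<delta>/2<..} u * D u \<partial>lborel)"
      by (intro nn_integral_cong) simp
    also have "\<dots> = a + X" unfolding a_def X_def
      by (rule nn_integral_add) measurable
    finally show ?thesis .
  qed
  have B: "(\<integral>\<^sup>+u. indicator {\<delta>/2<..} u * ennreal (\<phi> (u - \<delta>)) \<partial>lborel)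
      = (\<integral>\<^sup>+u. indicator {-\<delta>/2<..} u * ennreal (\<phi> u) \<partial>lborel)"
  proof -
    have "(\<integral>\<^sup>+u. indicator {\<delta>/2<..} u * ennreal (\<phi> (u - \<delta>)) \<partial>lborel)
      = (\<integral>\<^sup>+u. indicator {-\<delta>/2<..} u * ennreal (\<phi> u) \<partial>lborel)"
      apply (subst nn_integral_real_affine[where c=1 and t=\<delta>])
        apply measurable
      apply (simp only: abs_one ennreal_1 mult_1 mult_1_left)
      apply (rule nn_integral_cong)
      apply (simp add: indicator_def)
      done
    then show ?thesis .
  qed
  have C: "(\<integral>\<^sup>+u. indicator {-\<delta>/2<..} u * ennreal (\<phi> u) \<partial>lborel) = a + Y"
  proof -
    have "indicator {-\<delta>/2<..} u * ennreal (\<phi> u) = indicator {\<delta>/2<..} u * ennreal (\<phi> u) + indicator {-\<delta>/2<..\<delta>/2} u * ennreal (\<phi> u)" for u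
      using d by (auto simp: indicator_def)
    then have "(\<integral>\<^sup>+u. indicator {-\<delta>/2<..} u * ennreal (\<phi> u) \<partial>lborel) = (\<integral>\<^sup>+u. indicator {\<delta>/2<..} u * ennreal (\<phi> u) + indicator {-\<delta>/2<..\<delta>/2} u * ennreal (\<phi> u) \<partial>lborel)"
      by (intro nn_integral_cong) simp
    also have "\<dots> = a + Y" unfolding a_def Y_def
      by (rule nn_integral_add) measurable
    finally show ?thesis .
  qed
  have afin: "a \<noteq> \<top>"
  proof -
    have "a \<le> (\<integral>\<^sup>+u. ennreal (\<phi> u) \<partial>lborel)" unfolding a_def
      by (intro nn_integral_mono) (auto simp: indicator_def)
    also have "\<dots> = 1" unfolding \<phi>_def by (rule nd_total[OF s])
    finally show ?thesis by (auto simp: top_unique)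
  qed
  have "a + X = a + Y" using A B C by simp
  then have XY: "X = Y" using afin by (simp add: ennreal_add_left_cancel)
  have "Y \<le> (\<integral>\<^sup>+u. ennreal (1/\<sigma>) * indicator {-\<delta>/2<..\<delta>/2} u \<partial>lborel)"
    unfolding Y_def by (intro nn_integral_mono) (auto simp: indicator_def \<phi>_def intro!: ennreal_leI nd_le[OF s])
  also have "\<dots> = ennreal (1/\<sigma>) * ennreal \<delta>"
    using d by (subst nn_integral_cmult) auto
  also have "\<dots> = ennreal (\<delta>/\<sigma>)" using d s by (simp add: ennreal_mult[symmetric])
  finally have "X \<le> ennreal (\<delta>/\<sigma>)" using XY by simp
  then show ?thesis using step1 unfolding \<phi>_def X_def
    using order_trans[OF _ add_left_mono] by blast
qed

lemma shift_1d:
  fixes \<sigma> \<delta> :: real and H :: "real \<Rightarrow> ennreal"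
  assumes s: "\<sigma> > 0" and H[measurable]: "H \<in> borel_measurable borel"
    and H1: "\<And>u. H u \<le> 1"
  shows "(\<integral>\<^sup>+y. H (y + \<delta>) \<partial>density lborel (normal_density 0 \<sigma>))
     \<le> (\<integral>\<^sup>+y. H y \<partial>density lborel (normal_density 0 \<sigma>)) + ennreal (\<bar>\<delta>\<bar> / \<sigma>)"
proof -
  define \<phi> where "\<phi> = normal_density 0 \<sigma>"
  have [measurable]: "\<phi> \<in> borel_measurable borel" unfolding \<phi>_def by simp
  have e1: "(\<integral>\<^sup>+y. H (y + \<delta>) \<partial>density lborel \<phi>) = (\<integral>\<^sup>+y. ennreal (\<phi> y) * H (y + \<delta>) \<partial>lborel)"
    by (subst nn_integral_density) auto
  have e2: "(\<integral>\<^sup>+y. H y \<partial>density lborel \<phi>) = (\<integral>\<^sup>+y. ennreal (\<phi> y) * H y \<partial>lborel)"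
    by (subst nn_integral_density) auto
  have e3: "(\<integral>\<^sup>+y. ennreal (\<phi> y) * H (y + \<delta>) \<partial>lborel) = (\<integral>\<^sup>+u. ennreal (\<phi> (u - \<delta>)) * H u \<partial>lborel)"
    apply (subst (2) nn_integral_real_affine[where c=1 and t=\<delta>])
      apply measurable
    apply (simp only: abs_one ennreal_1 mult_1 mult_1_left)
    apply (rule nn_integral_cong)
    apply (simp add: add.commute)
    done
  show ?thesis
  proof (cases "\<delta> \<ge> 0")
    case True
    then show ?thesis using shift_core[OF s True H H1] e1 e2 e3 unfolding \<phi>_def by simp
  next
    case False
    define H' where "H' u = H (- u)" for u
    have [measurable]: "H' \<in> borel_measurable borel" unfolding H'_def by measurable
    have r1: "(\<integral>\<^sup>+u. ennreal (\<phi> (u - \<delta>)) * H u \<partial>lborel) = (\<integral>\<^sup>+u. ennreal (\<phi> (u - (-\<delta>))) * H' u \<partial>lborel)"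
      apply (subst nn_integral_real_affine[where c="-1" and t=0])
        apply measurable
      apply (simp only: abs_minus_cancel abs_one ennreal_1 mult_1 mult_1_left)
      apply (rule nn_integral_cong)
      apply (simp add: H'_def \<phi>_def)
      apply (metis nd_even minus_diff_eq diff_minus_eq_add add.commute)
      done
    have r2: "(\<integral>\<^sup>+u. ennreal (\<phi> u) * H u \<partial>lborel) = (\<integral>\<^sup>+u. ennreal (\<phi> u) * H' u \<partial>lborel)"
      apply (subst nn_integral_real_affine[where c="-1" and t=0])
        apply measurable
      apply (simp only: abs_minus_cancel abs_one ennreal_1 mult_1 mult_1_left)
      apply (rule nn_integral_cong)
      apply (simp add: H'_def \<phi>_def nd_even)
      done
    have "-\<delta> \<ge> 0" using False by simp
    from shift_core[OF s this, of H'] have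
      "(\<integral>\<^sup>+u. ennreal (\<phi> (u - (-\<delta>))) * H' u \<partial>lborel) \<le> (\<integral>\<^sup>+u. ennreal (\<phi> u) * H' u \<partial>lborel) + ennreal (-\<delta> / \<sigma>)"
      unfolding \<phi>_def H'_def using H1 by simp
    then show ?thesis using e1 e2 e3 r1 r2 False unfolding \<phi>_def by simp
  qed
qed

abbreviation Nd :: "real \<Rightarrow> real measure" where
  "Nd s2 \<equiv> density lborel (normal_density 0 (sqrt s2))"

lemma prob_Nd: "s2 > 0 \<Longrightarrow> prob_space (Nd s2)"
  by (rule prob_space_normal_density) simp

lemma space_Nd[simp]: "space (Nd s2) = UNIV" by simp
lemma sets_Nd[simp]: "sets (Nd s2) = sets borel" by simp

lemma space_NM: "space (noise_measure n s2) = PiE {..<n} (\<lambda>_. UNIV)"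
  unfolding noise_measure_def by (simp add: space_PiM)

lemma sets_NM: "sets (noise_measure n s2) = sets (vec_space n)"
  unfolding noise_measure_def vec_space_def by (intro sets_PiM_cong) auto

lemma space_vec: "space (vec_space n) = PiE {..<n} (\<lambda>_. UNIV)"
  unfolding vec_space_def by (simp add: space_PiM)

lemma prob_NM: "s2 > 0 \<Longrightarrow> prob_space (noise_measure n s2)"
  unfolding noise_measure_def by (intro prob_space_PiM prob_Nd)

lemma coord_shift:
  assumes s2: "s2 > 0" and k: "k < n" and B: "B \<in> sets (noise_measure n s2)"
  shows "emeasure (noise_measure n s2) {z \<in> space (noise_measure n s2). received n (\<lambda>i. if i = k then \<delta> else 0) z \<in> B}
    \<le> emeasure (noise_measure n s2) B + ennreal (\<bar>\<delta>\<bar> / sqrt s2)"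
proof -
  interpret P: product_prob_space "\<lambda>_. Nd s2" "{}"
    by (intro product_prob_space.intro product_sigma_finite.intro product_prob_space_axioms.intro)
      (auto intro: prob_space_imp_sigma_finite prob_Nd[OF s2])
  define I where "I = {..<n} - {k}"
  have fI: "finite I" "k \<notin> I" and ins: "insert k I = {..<n}" using k by (auto simp: I_def)
  have NM: "noise_measure n s2 = PiM (insert k I) (\<lambda>_. Nd s2)" unfolding noise_measure_def ins ..
  interpret PI: prob_space "PiM I (\<lambda>_. Nd s2)" by (intro prob_space_PiM prob_Nd[OF s2])
  define e where "e = (\<lambda>i::nat. if i = k then \<delta> else 0)"
  define S where "S = {z \<in> space (noise_measure n s2). received n e z \<in> B}"
  have Bv: "B \<in> sets (PiM (insert k I) (\<lambda>_. Nd s2))" using B NM by simp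
  have recm: "received n e \<in> measurable (noise_measure n s2) (noise_measure n s2)"
    unfolding received_def NM ins[symmetric]
    by (rule measurable_restrict) simp
  have S: "S \<in> sets (noise_measure n s2)" unfolding S_def
    using measurable_sets[OF recm B] by (simp add: vimage_def Int_def conj_commute)
  define H where "H y = (\<integral>\<^sup>+x. indicator B (x(k := y)) \<partial>PiM I (\<lambda>_. Nd s2))" for y
  have Hm: "H \<in> borel_measurable borel" unfolding H_def
    using Bv by measurable
  have H1: "H y \<le> 1" for y
  proof -
    have "H y \<le> (\<integral>\<^sup>+x. 1 \<partial>PiM I (\<lambda>_. Nd s2))" unfolding H_def
      by (intro nn_integral_mono) (auto simp: indicator_def)
    also have "\<dots> = 1" by (simp add: PI.emeasure_space_1)
    finally show ?thesis .
  qed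
  have eB: "emeasure (noise_measure n s2) B = (\<integral>\<^sup>+y. H y \<partial>Nd s2)"
  proof -
    have "emeasure (noise_measure n s2) B = (\<integral>\<^sup>+z. indicator B z \<partial>PiM (insert k I) (\<lambda>_. Nd s2))"
      using Bv NM by simp
    also have "\<dots> = (\<integral>\<^sup>+y. (\<integral>\<^sup>+x. indicator B (x(k := y)) \<partial>PiM I (\<lambda>_. Nd s2)) \<partial>Nd s2)"
      by (intro P.product_nn_integral_insert_rev fI borel_measurable_indicator Bv)
    finally show ?thesis unfolding H_def .
  qed
  have eS: "emeasure (noise_measure n s2) S = (\<integral>\<^sup>+y. H (y + \<delta>) \<partial>Nd s2)"
  proof -
    have S': "S \<in> sets (PiM (insert k I) (\<lambda>_. Nd s2))" using S NM by simp
    have "emeasure (noise_measure n s2) S = (\<integral>\<^sup>+z. indicator S z \<partial>PiM (insert k I) (\<lambda>_. Nd s2))"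
      using S' NM by simp
    also have "\<dots> = (\<integral>\<^sup>+y. (\<integral>\<^sup>+x. indicator S (x(k := y)) \<partial>PiM I (\<lambda>_. Nd s2)) \<partial>Nd s2)"
      by (intro P.product_nn_integral_insert_rev fI borel_measurable_indicator S')
    also have "\<dots> = (\<integral>\<^sup>+y. H (y + \<delta>) \<partial>Nd s2)"
      unfolding H_def
    proof (intro nn_integral_cong)
      fix y x assume x: "x \<in> space (PiM I (\<lambda>_. Nd s2))"
      then have xe: "x \<in> PiE I (\<lambda>_. UNIV)" by (simp add: space_PiM)
      have sp: "x(k := y) \<in> space (noise_measure n s2)"
        using xe k unfolding space_NM I_def by (auto simp: PiE_def extensional_def)
      have rc: "received n e (x(k := y)) = x(k := y + \<delta>)"
        using xe k unfolding received_def e_def I_def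
        by (auto simp: PiE_def extensional_def fun_eq_iff)
      show "indicator S (x(k := y)) = indicator B (x(k := y + \<delta>))"
        using sp rc unfolding S_def by (simp add: indicator_def)
    qed
    finally show ?thesis .
  qed
  have "emeasure (noise_measure n s2) S \<le> emeasure (noise_measure n s2) B + ennreal (\<bar>\<delta>\<bar> / sqrt s2)"
    unfolding eS eB using shift_1d[of "sqrt s2" H \<delta>] s2 Hm H1 by simp
  then show ?thesis unfolding S_def e_def .
qed

lemma recv_meas: "received n x \<in> measurable (noise_measure n s2) (noise_measure n s2)"
  unfolding received_def noise_measure_def
  by (rule measurable_restrict) simp

lemma recv_space: "received n x z \<in> space (noise_measure n s2)"
  unfolding received_def space_NM by auto

lemma recv_id: "z \<in> space (noise_measure n s2) \<Longrightarrow> received n (\<lambda>_. 0) z = z"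
  unfolding received_def space_NM by (auto simp: PiE_def extensional_def fun_eq_iff)

lemma vec_shift_e:
  assumes s2: "s2 > 0" and B: "B \<in> sets (noise_measure n s2)"
  shows "emeasure (noise_measure n s2) {z \<in> space (noise_measure n s2). received n v z \<in> B}
    \<le> emeasure (noise_measure n s2) B + ennreal ((\<Sum>i<n. \<bar>v i\<bar>) / sqrt s2)"
proof -
  let ?M = "noise_measure n s2"
  have main: "k \<le> n \<Longrightarrow> \<forall>B\<in>sets ?M. emeasure ?M {z \<in> space ?M. received n (\<lambda>i. if i < k then v i else 0) z \<in> B}
    \<le> emeasure ?M B + ennreal ((\<Sum>i<k. \<bar>v i\<bar>) / sqrt s2)" for k
  proof (induction k)
    case 0
    show ?case
    proof
      fix B assume B: "B \<in> sets ?M"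
      have "{z \<in> space ?M. received n (\<lambda>i. if i < 0 then v i else 0) z \<in> B} = B"
        using sets.sets_into_space[OF B] recv_id[of _ n s2] by auto
      then show "emeasure ?M {z \<in> space ?M. received n (\<lambda>i. if i < 0 then v i else 0) z \<in> B}
        \<le> emeasure ?M B + ennreal ((\<Sum>i<0. \<bar>v i\<bar>) / sqrt s2)" by simp
    qed
  next
    case (Suc k)
    then have IH: "\<forall>B\<in>sets ?M. emeasure ?M {z \<in> space ?M. received n (\<lambda>i. if i < k then v i else 0) z \<in> B}
      \<le> emeasure ?M B + ennreal ((\<Sum>i<k. \<bar>v i\<bar>) / sqrt s2)" and kn: "k < n" by auto
    show ?case
    proof
      fix B assume B: "B \<in> sets ?M"
      define e where "e = (\<lambda>i::nat. if i = k then v k else 0)"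
      define B' where "B' = {w \<in> space ?M. received n e w \<in> B}"
      have B': "B' \<in> sets ?M" unfolding B'_def
        using measurable_sets[OF recv_meas B, of e] by (simp add: vimage_def Int_def conj_commute)
      have eq: "{z \<in> space ?M. received n (\<lambda>i. if i < Suc k then v i else 0) z \<in> B}
         = {z \<in> space ?M. received n (\<lambda>i. if i < k then v i else 0) z \<in> B'}"
      proof -
        have "received n e (received n (\<lambda>i. if i < k then v i else 0) z) = received n (\<lambda>i. if i < Suc k then v i else 0) z" for z
          unfolding received_def e_def by (auto simp: fun_eq_iff less_Suc_eq)
        then show ?thesis unfolding B'_def using recv_space by auto
      qed
      have "emeasure ?M {z \<in> space ?M. received n (\<lambda>i. if i < Suc k then v i else 0) z \<in> B}
          \<le> emeasure ?M B' + ennreal ((\<Sum>i<k. \<bar>v i\<bar>) / sqrt s2)"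
        unfolding eq using IH B' by blast
      also have "emeasure ?M B' \<le> emeasure ?M B + ennreal (\<bar>v k\<bar> / sqrt s2)"
        unfolding B'_def e_def by (rule coord_shift[OF s2 kn B])
      finally have "emeasure ?M {z \<in> space ?M. received n (\<lambda>i. if i < Suc k then v i else 0) z \<in> B}
          \<le> emeasure ?M B + (ennreal (\<bar>v k\<bar> / sqrt s2) + ennreal ((\<Sum>i<k. \<bar>v i\<bar>) / sqrt s2))"
        by (simp add: add.assoc add_right_mono)
      also have "ennreal (\<bar>v k\<bar> / sqrt s2) + ennreal ((\<Sum>i<k. \<bar>v i\<bar>) / sqrt s2) = ennreal ((\<Sum>i<Suc k. \<bar>v i\<bar>) / sqrt s2)"
        using s2 by (subst ennreal_plus[symmetric]) (auto simp: sum_nonneg add_divide_distrib add.commute intro!: divide_nonneg_nonneg)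
      finally show "emeasure ?M {z \<in> space ?M. received n (\<lambda>i. if i < Suc k then v i else 0) z \<in> B}
          \<le> emeasure ?M B + ennreal ((\<Sum>i<Suc k. \<bar>v i\<bar>) / sqrt s2)" .
    qed
  qed
  have "received n (\<lambda>i. if i < n then v i else 0) z = received n v z" for z
    unfolding received_def by auto
  then show ?thesis using main[of n] B by simp
qed

lemma vec_shift:
  assumes s2: "s2 > 0" and B: "B \<in> sets (noise_measure n s2)"
  shows "measure (noise_measure n s2) {z \<in> space (noise_measure n s2). received n v z \<in> B}
    \<le> measure (noise_measure n s2) B + (\<Sum>i<n. \<bar>v i\<bar>) / sqrt s2"
proof -
  interpret prob_space "noise_measure n s2" by (rule prob_NM[OF s2])
  have S: "{z \<in> space (noise_measure n s2). received n v z \<in> B} \<in> sets (noise_measure n s2)"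
    using measurable_sets[OF recv_meas B, of v] by (simp add: vimage_def Int_def conj_commute)
  have "ennreal (measure (noise_measure n s2) {z \<in> space (noise_measure n s2). received n v z \<in> B})
     \<le> ennreal (measure (noise_measure n s2) B + (\<Sum>i<n. \<bar>v i\<bar>) / sqrt s2)"
    using vec_shift_e[OF s2 B, of v] S B
    using s2 by (subst ennreal_plus) (auto simp: emeasure_eq_measure sum_nonneg intro!: divide_nonneg_nonneg)
  then show ?thesis
    by (rule ennreal_le_iff[THEN iffD1, rotated]) (use s2 in \<open>auto simp: sum_nonneg intro!: add_nonneg_nonneg divide_nonneg_nonneg\<close>)
qed

lemma meas_NM_vec: "measurable (noise_measure n s2) N = measurable (vec_space n) N"
  by (rule measurable_cong_sets) (simp_all add: sets_NM)

lemma T_meas: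
  assumes "0 < n"
  shows "(\<lambda>z. nat (\<lfloor>z 0 / \<Delta>\<rfloor> mod int L)) \<in> measurable (noise_measure n s2) (count_space UNIV)"
proof -
  have "(\<lambda>z. z 0) \<in> measurable (noise_measure n s2) (Nd s2)"
    unfolding noise_measure_def using assms by (intro measurable_component_singleton) auto
  moreover have "measurable (noise_measure n s2) (Nd s2) = measurable (noise_measure n s2) borel"
    by (rule measurable_cong_sets) simp_all
  ultimately have "(\<lambda>z. z 0) \<in> measurable (noise_measure n s2) borel"
    by simp
  moreover have "(\<lambda>x::real. nat (\<lfloor>x / \<Delta>\<rfloor> mod int L)) \<in> measurable borel (count_space UNIV)"
  proof -
    have "(\<lambda>x::real. x / \<Delta>) \<in> borel_measurable borel" by measurable
    then have "(\<lambda>x::real. \<lfloor>x / \<Delta>\<rfloor>) \<in> measurable borel (count_space UNIV)"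
      using measurable_real_floor by (rule measurable_compose)
    then show ?thesis using measurable_count_space[of "\<lambda>k::int. nat (k mod int L)" UNIV]
      by (rule measurable_compose)
  qed
  ultimately show ?thesis by (rule measurable_compose)
qed

lemma comp0_meas:
  assumes "0 < n"
  shows "(\<lambda>y. y 0) \<in> measurable (vec_space n) borel"
  unfolding vec_space_def using assms by (intro measurable_component_singleton) auto

lemma dec_meas:
  fixes \<psi> :: "(nat \<Rightarrow> real) \<Rightarrow> nat"
  assumes n: "0 < n" and psi: "\<psi> \<in> measurable (vec_space n) (count_space UNIV)"
  shows "(\<lambda>y. F (\<psi> y) (\<lfloor>(y 0 - g (\<psi> y)) / \<Delta>\<rfloor>) :: nat) \<in> measurable (vec_space n) (count_space UNIV)"
proof -
  have "(\<lambda>y. F c (\<lfloor>(y 0 - g c) / \<Delta>\<rfloor>)) \<in> measurable (vec_space n) (count_space UNIV)" for c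
  proof -
    have "(\<lambda>x::real. (x - g c) / \<Delta>) \<in> borel_measurable borel" by measurable
    then have "(\<lambda>x::real. \<lfloor>(x - g c) / \<Delta>\<rfloor>) \<in> measurable borel (count_space UNIV)"
      using measurable_real_floor by (rule measurable_compose)
    then have "(\<lambda>x::real. F c (\<lfloor>(x - g c) / \<Delta>\<rfloor>)) \<in> measurable borel (count_space UNIV)"
      using measurable_count_space[of "F c" UNIV] by (rule measurable_compose)
    then show ?thesis using comp0_meas[OF n] by (rule measurable_compose[rotated])
  qed
  from measurable_compose_countable[where f="\<lambda>c y. F c \<lfloor>(y 0 - g c) / \<Delta>\<rfloor>", OF this psi] show ?thesis .
qed

lemma comp_recv_meas:
  assumes g: "g \<in> measurable (vec_space n) (count_space UNIV)"
    and T: "T \<in> measurable (noise_measure n s2) (count_space UNIV)"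
  shows "(\<lambda>z. g (received n (\<phi> (T z :: nat)) z) :: nat) \<in> measurable (noise_measure n s2) (count_space UNIV)"
proof -
  have "(\<lambda>z. g (received n (\<phi> t) z)) \<in> measurable (noise_measure n s2) (count_space UNIV)" for t
  proof -
    have "g \<in> measurable (noise_measure n s2) (count_space UNIV)" using g by (simp add: meas_NM_vec)
    then show ?thesis using recv_meas by (rule measurable_compose[rotated])
  qed
  from measurable_compose_countable[where f="\<lambda>t z. g (received n (\<phi> t) z)", OF this T] show ?thesis .
qed

lemma set_size_ge1: "1 \<le> set_size n x"
proof -
  have "1 \<le> \<lceil>exp (real n * x)\<rceil>" by (simp add: le_ceiling_iff)
  then show ?thesis unfolding set_size_def by linarith
qed

lemma ceil_exp_nonneg: "0 \<le> \<lceil>exp (real n * x)\<rceil>"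
  using ceiling_mono[OF exp_ge_zero[of "real n * x"]] by simp

lemma set_size_real: "real (set_size n x) = real_of_int \<lceil>exp (real n * x)\<rceil>"
  unfolding set_size_def using ceil_exp_nonneg[of n x] by simp

lemma set_size_ge: "exp (real n * x) \<le> real (set_size n x)"
  unfolding set_size_real by (rule le_of_int_ceiling)

lemma set_size_lt: "real (set_size n x) < exp (real n * x) + 1"
  unfolding set_size_real by linarith

lemma set_size_mult: "set_size n R \<le> set_size n Rh * set_size n (R - Rh)"
proof -
  have "exp (real n * R) = exp (real n * Rh) * exp (real n * (R - Rh))"
    by (simp add: exp_add[symmetric] algebra_simps)
  also have "\<dots> \<le> real (set_size n Rh) * real (set_size n (R - Rh))"
    by (intro mult_mono set_size_ge) auto
  finally have "exp (real n * R) \<le> real (set_size n Rh * set_size n (R - Rh))" by simp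
  then have "\<lceil>exp (real n * R)\<rceil> \<le> int (set_size n Rh * set_size n (R - Rh))"
    by (metis ceiling_le_iff of_int_of_nat_eq)
  then show ?thesis unfolding set_size_def[of n R] by (simp only: nat_le_iff)
qed

lemma shift_sum:
  assumes "0 < (K::nat)"
  shows "(\<Sum>s<K. g ((s + q) mod K)) = (\<Sum>c<K. g c)"
proof -
  have inj: "inj_on (\<lambda>s. (s + q) mod K) {..<K}"
  proof
    fix x y assume "x \<in> {..<K}" "y \<in> {..<K}" "(x + q) mod K = (y + q) mod K"
    then have "int ((x + q) mod K) = int ((y + q) mod K)" by simp
    then have e: "(int x + int q) mod int K = (int y + int q) mod int K" by (simp add: zmod_int)
    have "int x mod int K = ((int x + int q) mod int K - int q) mod int K" by (simp add: mod_diff_left_eq)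
    also have "\<dots> = ((int y + int q) mod int K - int q) mod int K" using e by simp
    also have "\<dots> = int y mod int K" by (simp add: mod_diff_left_eq)
    finally have "int x mod int K = int y mod int K" .
    then show "x = y" using \<open>x \<in> {..<K}\<close> \<open>y \<in> {..<K}\<close> by (simp add: zmod_int[symmetric])
  qed
  have im: "(\<lambda>s. (s + q) mod K) ` {..<K} = {..<K}"
    using assms by (intro endo_inj_surj inj) auto
  show ?thesis using sum.reindex[OF inj, of g] im by simp
qed

lemma jj_sum:
  assumes "0 < (L::nat)"
  shows "(\<Sum>m1<L. G (nat ((int m1 - int t) mod int L))) = (\<Sum>j<L. G j)"
proof -
  let ?h = "\<lambda>m1::nat. nat ((int m1 - int t) mod int L)"
  have inj: "inj_on ?h {..<L}"
  proof
    fix x y assume xy: "x \<in> {..<L}" "y \<in> {..<L}" "?h x = ?h y"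
    have "0 \<le> (int x - int t) mod int L" "0 \<le> (int y - int t) mod int L" using assms by simp_all
    then have e: "(int x - int t) mod int L = (int y - int t) mod int L"
      using xy(3) eq_nat_nat_iff by blast
    have "int x mod int L = ((int x - int t) mod int L + int t) mod int L" by (simp add: mod_add_left_eq)
    also have "\<dots> = ((int y - int t) mod int L + int t) mod int L" using e by simp
    also have "\<dots> = int y mod int L" by (simp add: mod_add_left_eq)
    finally have "int x mod int L = int y mod int L" .
    then show "x = y" using xy by (simp add: zmod_int[symmetric])
  qed
  have im: "?h ` {..<L} = {..<L}"
  proof (intro endo_inj_surj inj)
    show "?h ` {..<L} \<subseteq> {..<L}"
    proof
      fix j assume "j \<in> ?h ` {..<L}"
      then obtain m1 where j: "j = ?h m1" by auto
      have "0 \<le> (int m1 - int t) mod int L" "(int m1 - int t) mod int L < int L" using assms by simp_all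
      then show "j \<in> {..<L}" unfolding j using nat_less_iff by auto
    qed
  qed simp
  show ?thesis using sum.reindex[OF inj, of G] im by simp
qed

lemma exists_le_avg:
  fixes h :: "nat \<Rightarrow> real"
  assumes "finite A" "A \<noteq> {}" "(\<Sum>s\<in>A. h s) \<le> real (card A) * b"
  shows "\<exists>s\<in>A. h s \<le> b"
proof (rule ccontr)
  assume "\<not> ?thesis"
  then have "\<forall>s\<in>A. b < h s" by auto
  then have "(\<Sum>s\<in>A. b) < (\<Sum>s\<in>A. h s)" using assms(1,2) by (intro sum_strict_mono) auto
  then show False using assms(3) by simp
qed

lemma dec_q:
  assumes "q < (K::nat)"
  shows "nat ((int ((s + q) mod K) - int s) mod int K) = q"
proof -
  have "(int ((s + q) mod K) - int s) mod int K = ((int s + int q) mod int K - int s) mod int K"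
    by (simp add: zmod_int)
  also have "\<dots> = int q mod int K" by (simp add: mod_diff_left_eq)
  also have "\<dots> = int q" using assms by simp
  finally show ?thesis by simp
qed

lemma dec_m1:
  assumes L: "0 < (L::nat)" and D: "\<Delta> > 0"
  shows "nat (\<lfloor>(real (nat ((int (m mod L) - int (nat (\<lfloor>x / \<Delta>\<rfloor> mod int L))) mod int L)) * \<Delta> + x) / \<Delta>\<rfloor> mod int L) = m mod L"
proof -
  define k where "k = \<lfloor>x / \<Delta>\<rfloor>"
  define j where "j = (int (m mod L) - k mod int L) mod int L"
  have j0: "0 \<le> j" unfolding j_def using L by simp
  have t: "int (nat (k mod int L)) = k mod int L" using L by simp
  have "(real (nat j) * \<Delta> + x) / \<Delta> = x / \<Delta> + of_int j" using D j0 by (simp add: field_simps)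
  then have fl: "\<lfloor>(real (nat j) * \<Delta> + x) / \<Delta>\<rfloor> = k + j" unfolding k_def by simp
  have "(k + j) mod int L = (k + (int (m mod L) - k mod int L)) mod int L"
    unfolding j_def by (simp add: mod_add_right_eq)
  also have "k + (int (m mod L) - k mod int L) = int (m mod L) + int L * (k div int L)"
    by (simp add: minus_mod_eq_mult_div[symmetric])
  also have "(int (m mod L) + int L * (k div int L)) mod int L = int (m mod L)" by (simp add: zmod_int)
  finally have "(k + j) mod int L = int (m mod L)" .
  then show ?thesis using fl t unfolding j_def k_def[symmetric] by simp
qed

lemma helped_error_nonneg: "0 \<le> helped_error n R s2 \<phi> \<psi> T"
  unfolding helped_error_def by (intro mult_nonneg_nonneg sum_nonneg) auto

lemma opt_le: assumes "helped_code n R Rh P s2 \<phi> \<psi> T"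
  shows "opt_helped_error n R Rh P s2 \<le> helped_error n R s2 \<phi> \<psi> T"
  unfolding opt_helped_error_def
proof (rule cInf_lower)
  show "helped_error n R s2 \<phi> \<psi> T \<in> (\<lambda>(\<phi>, \<psi>, T). helped_error n R s2 \<phi> \<psi> T) ` {(\<phi>, \<psi>, T). helped_code n R Rh P s2 \<phi> \<psi> T}"
    using assms by (intro image_eqI[where x="(\<phi>, \<psi>, T)"]) auto
  show "bdd_below ((\<lambda>(\<phi>, \<psi>, T). helped_error n R s2 \<phi> \<psi> T) ` {(\<phi>, \<psi>, T). helped_code n R Rh P s2 \<phi> \<psi> T})"
    by (rule bdd_belowI[where m=0]) (auto simp: helped_error_nonneg)
qed

lemma opt_nonneg:
  assumes "helped_code n R Rh P s2 \<phi> \<psi> T"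
  shows "0 \<le> opt_helped_error n R Rh P s2"
  unfolding opt_helped_error_def
proof (rule cInf_greatest)
  show "(\<lambda>(\<phi>, \<psi>, T). helped_error n R s2 \<phi> \<psi> T) ` {(\<phi>, \<psi>, T). helped_code n R Rh P s2 \<phi> \<psi> T} \<noteq> {}"
    using assms by auto
qed (auto simp: helped_error_nonneg)

lemma sum_sq_split:
  fixes x :: "nat \<Rightarrow> real"
  assumes "0 < n"
  shows "(\<Sum>i<n. (x i + (if i = 0 then d else 0))\<^sup>2) = (\<Sum>i<n. (x i)\<^sup>2) + 2 * x 0 * d + d\<^sup>2"
proof -
  have "(\<Sum>i<n. (x i + (if i = 0 then d else 0))\<^sup>2) = (\<Sum>i<n. (x i)\<^sup>2 + (if i = 0 then 2 * x 0 * d + d\<^sup>2 else 0))"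
    by (intro sum.cong) (auto simp: power2_eq_square algebra_simps)
  also have "\<dots> = (\<Sum>i<n. (x i)\<^sup>2) + (\<Sum>i<n. (if i = 0 then 2 * x 0 * d + d\<^sup>2 else 0))"
    by (rule sum.distrib)
  also have "(\<Sum>i<n. (if i = 0 then 2 * x 0 * d + d\<^sup>2 else 0)) = 2 * x 0 * d + d\<^sup>2"
    using assms by (simp add: sum.delta)
  finally show ?thesis by simp
qed

lemma sum_abs_split:
  fixes x :: "nat \<Rightarrow> real"
  assumes "0 < n" "0 \<le> d"
  shows "(\<Sum>i<n. \<bar>x i + (if i = 0 then d else 0)\<bar>) \<le> (\<Sum>i<n. \<bar>x i\<bar>) + d"
proof -
  have "(\<Sum>i<n. \<bar>x i + (if i = 0 then d else 0)\<bar>) \<le> (\<Sum>i<n. \<bar>x i\<bar> + (if i = 0 then d else 0))"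
    using assms by (intro sum_mono) auto
  also have "\<dots> = (\<Sum>i<n. \<bar>x i\<bar>) + (\<Sum>i<n. (if i = 0 then d else 0))" by (rule sum.distrib)
  also have "(\<Sum>i<n. (if i = 0 then d else 0)) = d" using assms by (simp add: sum.delta)
  finally show ?thesis by simp
qed

lemma measure_sum_indicator:
  assumes "prob_space M" "\<And>j. j \<in> J \<Longrightarrow> A j \<in> sets M" "finite J"
  shows "(\<Sum>j\<in>J. measure M (A j)) = integral\<^sup>L M (\<lambda>z. \<Sum>j\<in>J. indicator (A j) z)"
proof -
  interpret prob_space M by fact
  have "(\<Sum>j\<in>J. measure M (A j)) = (\<Sum>j\<in>J. integral\<^sup>L M (indicator (A j)))"
    using assms(2) by (intro sum.cong) (auto simp: Int_absorb2 sets.sets_into_space)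
  also have "\<dots> = integral\<^sup>L M (\<lambda>z. \<Sum>j\<in>J. indicator (A j) z)"
    using Bochner_Integration.integral_sum[where I=J and M=M and f="\<lambda>j. indicator (A j) :: _ \<Rightarrow> real"] assms(2) by (simp add: emeasure_eq_measure)
  finally show ?thesis .
qed

lemma scheme:
  fixes f :: "nat \<Rightarrow> nat \<Rightarrow> real" and \<psi> :: "(nat \<Rightarrow> real) \<Rightarrow> nat"
  assumes n: "0 < n" and s2: "0 < s2" and P: "0 < P"
    and pc: "plain_code n (R - Rh) P f \<psi>" and \<beta>: "0 < \<beta>"
  shows "opt_helped_error n R Rh P s2 \<le>
    real (set_size n Rh * set_size n (R - Rh)) / real (set_size n R) * plain_error n (R - Rh) s2 f \<psi> + \<beta>"
proof -
  define L where "L = set_size n Rh"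
  define K where "K = set_size n (R - Rh)"
  define M where "M = set_size n R"
  have L1: "1 \<le> L" and K1: "1 \<le> K" and M1: "1 \<le> M" unfolding L_def K_def M_def by (rule set_size_ge1)+
  have MLK: "M \<le> L * K" unfolding L_def K_def M_def by (rule set_size_mult)
  have \<psi>m: "\<psi> \<in> measurable (vec_space n) (count_space UNIV)" and \<psi>K: "\<And>y. \<psi> y < K"
    and pw: "(1 / real K) * (\<Sum>m<K. \<Sum>i<n. (f m i)\<^sup>2) \<le> real n * P"
    using pc unfolding plain_code_def K_def by auto
  define p where "p c = (\<Sum>i<n. (f c i)\<^sup>2)" for c
  define S where "S = (\<Sum>c<K. p c)"
  have p0: "0 \<le> p c" for c unfolding p_def by (intro sum_nonneg) auto
  have SK: "S \<le> real K * (real n * P)" using pw K1 unfolding S_def p_def by (simp add: field_simps)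
  have "\<exists>s\<in>{..<K}. (\<Sum>m<M. p ((s + m div L) mod K)) \<le> real M * S / real K"
  proof (rule exists_le_avg)
    have "(\<Sum>s<K. \<Sum>m<M. p ((s + m div L) mod K)) = (\<Sum>m<M. \<Sum>s<K. p ((s + m div L) mod K))"
      by (rule sum.swap)
    also have "\<dots> = (\<Sum>m<M. S)" unfolding S_def using K1 by (intro sum.cong refl shift_sum) auto
    also have "\<dots> = real (card {..<K}) * (real M * S / real K)" using K1 by simp
    finally show "(\<Sum>s\<in>{..<K}. \<Sum>m<M. p ((s + m div L) mod K)) \<le> real (card {..<K}) * (real M * S / real K)" by simp
  qed (use K1 in \<open>auto simp: lessThan_empty_iff\<close>)
  then obtain s where sK: "s < K" and sp: "(\<Sum>m<M. p ((s + m div L) mod K)) \<le> real M * S / real K" by auto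
  define G where "G = (\<Sum>c<K. \<Sum>i<n. \<bar>f c i\<bar>)"
  have G0: "0 \<le> G" unfolding G_def by (intro sum_nonneg) auto
  have GK: "(\<Sum>i<n. \<bar>f c i\<bar>) \<le> G" if "c < K" for c
    unfolding G_def using that by (intro member_le_sum) (auto intro: sum_nonneg)
  have f0G: "\<bar>f c 0\<bar> \<le> G" if "c < K" for c
  proof -
    have "\<bar>f c 0\<bar> \<le> (\<Sum>i<n. \<bar>f c i\<bar>)" using n by (intro member_le_sum[where f="\<lambda>i. \<bar>f c i\<bar>"]) auto
    then show ?thesis using GK[OF that] by simp
  qed
  define \<sigma> where "\<sigma> = sqrt s2"
  have \<sigma>0: "0 < \<sigma>" unfolding \<sigma>_def using s2 by simp
  define \<gamma> where "\<gamma> = \<beta> * real M * \<sigma> / real (L * K)"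
  have \<gamma>0: "0 < \<gamma>" unfolding \<gamma>_def using \<beta> \<sigma>0 M1 L1 K1 by simp
  define \<eta> where "\<eta> = min (1/2) (\<gamma> / (2 * (G + 1)))"
  have \<eta>0: "0 < \<eta>" unfolding \<eta>_def using \<gamma>0 G0 by auto
  have \<eta>1: "\<eta> \<le> 1/2" unfolding \<eta>_def by (rule min.cobounded1)
  have \<eta>G: "\<eta> * G \<le> \<gamma> / 2"
  proof -
    have "\<eta> * G \<le> (\<gamma> / (2 * (G + 1))) * G" unfolding \<eta>_def using G0 by (intro mult_right_mono) auto
    also have "\<dots> \<le> (\<gamma> / (2 * (G + 1))) * (G + 1)" using \<gamma>0 G0 by (intro mult_left_mono) auto
    also have "\<dots> = \<gamma> / 2" using G0 by (simp add: field_simps)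
    finally show ?thesis .
  qed
  define a where "a = 1 - \<eta>"
  have a0: "0 \<le> a" and a1: "a \<le> 1" unfolding a_def using \<eta>0 \<eta>1 by auto
  define Lr where "Lr = real L"
  have Lr1: "1 \<le> Lr" unfolding Lr_def using L1 by simp
  define \<Delta> where "\<Delta> = min 1 (min (\<eta> * real n * P / (2 * Lr * G + Lr\<^sup>2)) (\<gamma> / (2 * Lr)))"
  have den: "0 < 2 * Lr * G + Lr\<^sup>2" using Lr1 G0 by (simp add: add_nonneg_pos)
  have \<Delta>0: "0 < \<Delta>" unfolding \<Delta>_def using \<eta>0 n P den \<gamma>0 Lr1 by auto
  have \<Delta>1: "\<Delta> \<le> 1" unfolding \<Delta>_def by simp
  have \<Delta>P: "\<Delta> * (2 * Lr * G + Lr\<^sup>2) \<le> \<eta> * real n * P"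
  proof -
    have "\<Delta> \<le> \<eta> * real n * P / (2 * Lr * G + Lr\<^sup>2)" unfolding \<Delta>_def by simp
    then show ?thesis using den by (simp add: field_simps)
  qed
  have \<Delta>L: "\<Delta> * Lr \<le> \<gamma> / 2"
  proof -
    have "\<Delta> \<le> \<gamma> / (2 * Lr)" unfolding \<Delta>_def by simp
    then show ?thesis using Lr1 by (simp add: field_simps)
  qed
  define T where "T z = nat (\<lfloor>z 0 / \<Delta>\<rfloor> mod int L)" for z :: "nat \<Rightarrow> real"
  define cw where "cw m = (s + m div L) mod K" for m
  define jj where "jj m t = nat ((int (m mod L) - int t) mod int L)" for m t :: nat
  define \<phi> where "\<phi> m t i = a * f (cw m) i + (if i = 0 then \<Delta> * real (jj m t) else 0)" for m t i :: nat
  define Fd where "Fd c k = (let q = nat ((int c - int s) mod int K); m1 = nat (k mod int L); m = q * L + m1 in if m < M then m else 0)" for c :: nat and k :: int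
  define \<psi>' where "\<psi>' y = Fd (\<psi> y) \<lfloor>(y 0 - a * f (\<psi> y) 0) / \<Delta>\<rfloor>" for y :: "nat \<Rightarrow> real"
  have cwK: "cw m < K" for m unfolding cw_def using K1 by simp
  have jjL: "jj m t < L" for m t unfolding jj_def using L1 by (simp add: nat_less_iff)
  have Tm: "T \<in> measurable (noise_measure n s2) (count_space UNIV)" unfolding T_def by (rule T_meas[OF n])
  have TL: "T z < L" for z unfolding T_def using L1 by (simp add: nat_less_iff)
  have \<psi>'m: "\<psi>' \<in> measurable (vec_space n) (count_space UNIV)"
    unfolding \<psi>'_def by (rule dec_meas[OF n \<psi>m])
  have \<psi>'M: "\<psi>' y < M" for y unfolding \<psi>'_def Fd_def using M1 by (simp add: Let_def)
  interpret NM: prob_space "noise_measure n s2" by (rule prob_NM[OF s2])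
  have pow_pt: "(\<Sum>i<n. (\<phi> m t i)\<^sup>2) \<le> a * p (cw m) + \<eta> * real n * P" for m t
  proof -
    define d where "d = \<Delta> * real (jj m t)"
    have d0: "0 \<le> d" and dL: "d \<le> \<Delta> * Lr" unfolding d_def Lr_def using \<Delta>0 jjL[of m t]
      by (auto intro!: mult_left_mono)
    have "(\<Sum>i<n. (\<phi> m t i)\<^sup>2) = (\<Sum>i<n. (a * f (cw m) i)\<^sup>2) + 2 * (a * f (cw m) 0) * d + d\<^sup>2"
      unfolding \<phi>_def d_def by (rule sum_sq_split[OF n])
    also have "(\<Sum>i<n. (a * f (cw m) i)\<^sup>2) = a\<^sup>2 * p (cw m)"
      unfolding p_def by (simp add: power_mult_distrib sum_distrib_left)
    also have "a\<^sup>2 * p (cw m) \<le> a * p (cw m)"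
      using mult_left_le_one_le[OF a0 a0 a1] p0 by (intro mult_right_mono) (auto simp: power2_eq_square)
    also have "2 * (a * f (cw m) 0) * d \<le> 2 * G * (\<Delta> * Lr)"
    proof -
      have "a * f (cw m) 0 \<le> a * \<bar>f (cw m) 0\<bar>" by (rule mult_left_mono[OF abs_ge_self a0])
      also have "\<dots> \<le> \<bar>f (cw m) 0\<bar>" by (rule mult_left_le_one_le[OF abs_ge_zero a0 a1])
      also have "\<dots> \<le> G" by (rule f0G[OF cwK[of m]])
      finally have x: "a * f (cw m) 0 \<le> G" .
      have "(a * f (cw m) 0) * d \<le> G * d" by (rule mult_right_mono[OF x d0])
      also have "\<dots> \<le> G * (\<Delta> * Lr)" by (rule mult_left_mono[OF dL G0])
      finally have "(a * f (cw m) 0) * d \<le> G * (\<Delta> * Lr)" .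
      then show ?thesis by simp
    qed
    also have "d\<^sup>2 \<le> \<Delta> * Lr\<^sup>2"
    proof -
      have "d\<^sup>2 \<le> (\<Delta> * Lr)\<^sup>2" using d0 dL by (intro power_mono) auto
      also have "\<dots> = \<Delta> * \<Delta> * Lr\<^sup>2" by (simp add: power2_eq_square)
      also have "\<dots> \<le> \<Delta> * Lr\<^sup>2" using \<Delta>0 \<Delta>1 by (intro mult_right_mono) (auto simp: mult_le_cancel_left1)
      finally show ?thesis .
    qed
    finally have "(\<Sum>i<n. (\<phi> m t i)\<^sup>2) \<le> a * p (cw m) + \<Delta> * (2 * Lr * G + Lr\<^sup>2)"
      by (simp add: algebra_simps)
    then show ?thesis using \<Delta>P by simp
  qed
  have pow: "(1 / real M) * (\<Sum>m<M. integral\<^sup>L (noise_measure n s2) (\<lambda>z. \<Sum>i<n. (\<phi> m (T z) i)\<^sup>2)) \<le> real n * P"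
  proof -
    have int_le: "integral\<^sup>L (noise_measure n s2) (\<lambda>z. \<Sum>i<n. (\<phi> m (T z) i)\<^sup>2) \<le> a * p (cw m) + \<eta> * real n * P" for m
    proof (rule NM.integral_le_const)
      have meas: "(\<lambda>z. \<Sum>i<n. (\<phi> m (T z) i)\<^sup>2) \<in> borel_measurable (noise_measure n s2)"
        using measurable_compose[OF Tm, of "\<lambda>t. \<Sum>i<n. (\<phi> m t i)\<^sup>2" borel] by simp
      show "integrable (noise_measure n s2) (\<lambda>z. \<Sum>i<n. (\<phi> m (T z) i)\<^sup>2)"
      proof (rule NM.integrable_const_bound[where B="a * p (cw m) + \<eta> * real n * P"])
        show "AE x in noise_measure n s2. norm (\<Sum>i<n. (\<phi> m (T x) i)\<^sup>2) \<le> a * p (cw m) + \<eta> * real n * P"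
        proof (rule AE_I2)
          fix x
          have "0 \<le> (\<Sum>i<n. (\<phi> m (T x) i)\<^sup>2)" by (intro sum_nonneg) auto
          then show "norm (\<Sum>i<n. (\<phi> m (T x) i)\<^sup>2) \<le> a * p (cw m) + \<eta> * real n * P"
            using pow_pt[of m "T x"] by simp
        qed
      qed (rule meas)
    qed (use pow_pt in auto)
    have "(\<Sum>m<M. integral\<^sup>L (noise_measure n s2) (\<lambda>z. \<Sum>i<n. (\<phi> m (T z) i)\<^sup>2))
        \<le> (\<Sum>m<M. a * p (cw m) + \<eta> * real n * P)" by (intro sum_mono int_le)
    also have "\<dots> = a * (\<Sum>m<M. p (cw m)) + real M * (\<eta> * real n * P)"
      by (simp add: sum.distrib sum_distrib_left)
    also have "\<dots> \<le> a * (real M * S / real K) + real M * (\<eta> * real n * P)"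
      using sp a0 unfolding cw_def by (intro add_right_mono mult_left_mono) auto
    also have "\<dots> \<le> a * (real M * (real n * P)) + real M * (\<eta> * real n * P)"
    proof -
      have K0: "0 < real K" using K1 by simp
      have "S / real K \<le> real n * P" using SK K0 by (simp add: pos_divide_le_eq mult.commute)
      then have "real M * (S / real K) \<le> real M * (real n * P)" by (intro mult_left_mono) auto
      then have "real M * S / real K \<le> real M * (real n * P)" by simp
      then show ?thesis using a0 by (intro add_right_mono mult_left_mono) auto
    qed
    also have "\<dots> = real M * (real n * P)" unfolding a_def by (simp add: algebra_simps)
    finally show ?thesis using M1 by (simp add: field_simps)
  qed
  have code: "helped_code n R Rh P s2 \<phi> \<psi>' T"
    unfolding helped_code_def using Tm TL \<psi>'m \<psi>'M pow unfolding L_def M_def by auto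
  let ?N = "noise_measure n s2"
  have \<psi>N: "\<psi> \<in> measurable ?N (count_space UNIV)" using \<psi>m by (simp add: meas_NM_vec)
  define Bc where "Bc c = {z \<in> space ?N. \<psi> (received n (f c) z) \<noteq> c}" for c
  have Bcm: "Bc c \<in> sets ?N" for c
  proof -
    have gm: "(\<lambda>z. \<psi> (received n (f c) z)) \<in> measurable ?N (count_space UNIV)"
      using recv_meas \<psi>N by (rule measurable_compose)
    have "Bc c = (\<lambda>z. \<psi> (received n (f c) z)) -` (UNIV - {c}) \<inter> space ?N" unfolding Bc_def by auto
    also have "\<dots> \<in> sets ?N" by (rule measurable_sets[OF gm]) simp
    finally show ?thesis .
  qed
  define w where "w c j i = - \<eta> * f c i + (if i = 0 then \<Delta> * real j else 0)" for c j i :: nat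
  define Wc where "Wc c j = {z \<in> space ?N. received n (w c j) z \<in> Bc c}" for c j
  have Wcm: "Wc c j \<in> sets ?N" for c j
    unfolding Wc_def using measurable_sets[OF recv_meas Bcm, of "w c j" c] by (simp add: vimage_def Int_def conj_commute)
  define Fm where "Fm m = {z \<in> space ?N. \<psi> (received n (\<phi> m (T z)) z) \<noteq> cw m}" for m
  have Fmm: "Fm m \<in> sets ?N" for m
  proof -
    have gm: "(\<lambda>z. \<psi> (received n (\<phi> m (T z)) z)) \<in> measurable ?N (count_space UNIV)"
      by (rule comp_recv_meas[OF \<psi>m Tm])
    have "Fm m = (\<lambda>z. \<psi> (received n (\<phi> m (T z)) z)) -` (UNIV - {cw m}) \<inter> space ?N" unfolding Fm_def by auto
    also have "\<dots> \<in> sets ?N" by (rule measurable_sets[OF gm]) simp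
    finally show ?thesis .
  qed
  define E where "E m = {z \<in> space ?N. \<psi>' (received n (\<phi> m (T z)) z) \<noteq> m}" for m
  have recv_split: "received n (\<phi> m t) z = received n (f (cw m)) (received n (w (cw m) (jj m t)) z)" for m t z
    unfolding received_def \<phi>_def w_def a_def by (auto simp: fun_eq_iff algebra_simps)
  have EF: "E m \<subseteq> Fm m" if mM: "m < M" for m
  proof
    fix z assume zE: "z \<in> E m"
    then have zs: "z \<in> space ?N" unfolding E_def by auto
    show "z \<in> Fm m"
    proof (rule ccontr)
      assume "z \<notin> Fm m"
      then have \<psi>c: "\<psi> (received n (\<phi> m (T z)) z) = cw m" using zs unfolding Fm_def by auto
      define y where "y = received n (\<phi> m (T z)) z"
      have y0: "y 0 - a * f (cw m) 0 = real (jj m (T z)) * \<Delta> + z 0"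
        unfolding y_def received_def \<phi>_def using n by simp
      have qd: "m div L < K" using mM MLK by (metis less_mult_imp_div_less less_le_trans mult.commute)
      have q: "nat ((int (cw m) - int s) mod int K) = m div L" unfolding cw_def by (rule dec_q[OF qd])
      have m1: "nat (\<lfloor>(real (jj m (T z)) * \<Delta> + z 0) / \<Delta>\<rfloor> mod int L) = m mod L"
        unfolding jj_def T_def using L1 \<Delta>0 by (intro dec_m1) auto
      have "\<psi>' y = m"
        unfolding \<psi>'_def Fd_def using \<psi>c y0 q m1 mM unfolding y_def[symmetric] by (simp add: Let_def)
      then show False using zE unfolding E_def y_def by simp
    qed
  qed
  have PE: "measure ?N (E m) \<le> measure ?N (Fm m)" if "m < M" for m
    by (rule NM.finite_measure_mono[OF EF[OF that] Fmm])
  define \<delta>' where "\<delta>' = (\<eta> * G + \<Delta> * Lr) / \<sigma>"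
  have \<delta>'\<gamma>: "\<delta>' \<le> \<gamma> / \<sigma>" unfolding \<delta>'_def using \<eta>G \<Delta>L \<sigma>0 by (intro divide_right_mono) auto
  have Wb: "measure ?N (Wc c j) \<le> measure ?N (Bc c) + \<delta>'" if "c < K" "j < L" for c j
  proof -
    have "measure ?N (Wc c j) \<le> measure ?N (Bc c) + (\<Sum>i<n. \<bar>w c j i\<bar>) / sqrt s2"
      unfolding Wc_def by (rule vec_shift[OF s2 Bcm])
    also have "(\<Sum>i<n. \<bar>w c j i\<bar>) \<le> \<eta> * G + \<Delta> * Lr"
    proof -
      have "(\<Sum>i<n. \<bar>w c j i\<bar>) \<le> (\<Sum>i<n. \<bar>- \<eta> * f c i\<bar>) + \<Delta> * real j"
        unfolding w_def using \<Delta>0 by (intro sum_abs_split[OF n]) auto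
      also have "(\<Sum>i<n. \<bar>- \<eta> * f c i\<bar>) = \<eta> * (\<Sum>i<n. \<bar>f c i\<bar>)"
        using \<eta>0 by (simp add: abs_mult sum_distrib_left)
      also have "\<eta> * (\<Sum>i<n. \<bar>f c i\<bar>) \<le> \<eta> * G" using GK[OF that(1)] \<eta>0 by (intro mult_left_mono) auto
      also have "\<Delta> * real j \<le> \<Delta> * Lr" unfolding Lr_def using that(2) \<Delta>0 by (intro mult_left_mono) auto
      finally show ?thesis by simp
    qed
    then have "(\<Sum>i<n. \<bar>w c j i\<bar>) / sqrt s2 \<le> \<delta>'" unfolding \<delta>'_def \<sigma>_def using s2 by (intro divide_right_mono) auto
    finally show ?thesis by simp
  qed
  have qb: "(\<Sum>m1<L. measure ?N (Fm (m1 + q * L))) \<le> real L * (measure ?N (Bc ((s + q) mod K)) + \<delta>')" if qK: "q < K" for q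
  proof -
    define c where "c = (s + q) mod K"
    have cK: "c < K" unfolding c_def using K1 by simp
    have pt: "(\<Sum>m1<L. indicator (Fm (m1 + q * L)) z) = (\<Sum>j<L. indicator (Wc c j) z :: real)" if zs: "z \<in> space ?N" for z
    proof -
      have "indicator (Fm (m1 + q * L)) z = (indicator (Wc c (nat ((int m1 - int (T z)) mod int L))) z :: real)" if "m1 < L" for m1
      proof -
        have dv: "(m1 + q * L) div L = q" "(m1 + q * L) mod L = m1" using that by auto
        have cw: "cw (m1 + q * L) = c" unfolding cw_def c_def dv ..
        have jj: "jj (m1 + q * L) (T z) = nat ((int m1 - int (T z)) mod int L)" unfolding jj_def dv ..
        have "z \<in> Fm (m1 + q * L) \<longleftrightarrow> z \<in> Wc c (nat ((int m1 - int (T z)) mod int L))"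
          unfolding Fm_def Wc_def Bc_def using zs recv_space
          by (simp add: recv_split[of "m1 + q * L" "T z" z] cw jj)
        then show ?thesis by (simp add: indicator_def)
      qed
      then have "(\<Sum>m1<L. indicator (Fm (m1 + q * L)) z) = (\<Sum>m1<L. indicator (Wc c (nat ((int m1 - int (T z)) mod int L))) z :: real)"
        by (intro sum.cong) auto
      also have "\<dots> = (\<Sum>j<L. indicator (Wc c j) z)"
        using L1 by (intro jj_sum[where G="\<lambda>j. indicator (Wc c j) z"]) auto
      finally show ?thesis .
    qed
    have "(\<Sum>m1<L. measure ?N (Fm (m1 + q * L))) = integral\<^sup>L ?N (\<lambda>z. \<Sum>m1<L. indicator (Fm (m1 + q * L)) z)"
      by (rule measure_sum_indicator[OF prob_NM[OF s2]]) (auto intro: Fmm)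
    also have "\<dots> = integral\<^sup>L ?N (\<lambda>z. \<Sum>j<L. indicator (Wc c j) z)"
      by (intro Bochner_Integration.integral_cong refl pt)
    also have "\<dots> = (\<Sum>j<L. measure ?N (Wc c j))"
      by (rule measure_sum_indicator[OF prob_NM[OF s2], symmetric]) (auto intro: Wcm)
    also have "\<dots> \<le> (\<Sum>j<L. measure ?N (Bc c) + \<delta>')" by (intro sum_mono Wb cK) auto
    also have "\<dots> = real L * (measure ?N (Bc c) + \<delta>')" by simp
    finally show ?thesis unfolding c_def .
  qed
  have pe: "plain_error n (R - Rh) s2 f \<psi> = (1 / real K) * (\<Sum>c<K. measure ?N (Bc c))"
    unfolding plain_error_def Bc_def K_def ..
  have tot: "(\<Sum>m<M. measure ?N (E m)) \<le> real L * (\<Sum>c<K. measure ?N (Bc c)) + real K * real L * \<delta>'"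
  proof -
    have "(\<Sum>m<M. measure ?N (E m)) \<le> (\<Sum>m<M. measure ?N (Fm m))" by (intro sum_mono PE) auto
    also have "\<dots> \<le> (\<Sum>m<K * L. measure ?N (Fm m))"
      using MLK by (intro sum_mono2) (auto simp: mult.commute)
    also have "\<dots> = (\<Sum>q<K. \<Sum>m\<in>{q * L..<q * L + L}. measure ?N (Fm m))"
      by (rule sum.nat_group[symmetric])
    also have "\<dots> = (\<Sum>q<K. \<Sum>m1<L. measure ?N (Fm (m1 + q * L)))"
    proof (rule sum.cong[OF refl])
      fix q assume "q \<in> {..<K}"
      have "(\<Sum>m\<in>{0 + q * L..<L + q * L}. measure ?N (Fm m)) = (\<Sum>m1\<in>{0..<L}. measure ?N (Fm (m1 + q * L)))"
        by (rule sum.shift_bounds_nat_ivl)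
      then show "(\<Sum>m\<in>{q * L..<q * L + L}. measure ?N (Fm m)) = (\<Sum>m1<L. measure ?N (Fm (m1 + q * L)))"
        by (simp add: add.commute atLeast0LessThan)
    qed
    also have "\<dots> \<le> (\<Sum>q<K. real L * (measure ?N (Bc ((s + q) mod K)) + \<delta>'))"
      by (intro sum_mono qb) auto
    also have "\<dots> = real L * (\<Sum>q<K. measure ?N (Bc ((q + s) mod K))) + real K * real L * \<delta>'"
      by (simp add: sum.distrib sum_distrib_left add.commute algebra_simps)
    also have "(\<Sum>q<K. measure ?N (Bc ((q + s) mod K))) = (\<Sum>c<K. measure ?N (Bc c))"
      using K1 by (intro shift_sum[where g="\<lambda>c. measure ?N (Bc c)"]) auto
    finally show ?thesis .
  qed
  have he: "helped_error n R s2 \<phi> \<psi>' T \<le> real (L * K) / real M * plain_error n (R - Rh) s2 f \<psi> + \<beta>"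
  proof -
    have "helped_error n R s2 \<phi> \<psi>' T = (1 / real M) * (\<Sum>m<M. measure ?N (E m))"
      unfolding helped_error_def E_def M_def ..
    also have "\<dots> \<le> (1 / real M) * (real L * (\<Sum>c<K. measure ?N (Bc c)) + real K * real L * \<delta>')"
      using tot M1 by (intro mult_left_mono) auto
    also have "\<dots> = real (L * K) / real M * plain_error n (R - Rh) s2 f \<psi> + real (L * K) / real M * \<delta>'"
      unfolding pe using K1 apply (simp add: field_simps) by (simp add: add_divide_distrib)
    also have "real (L * K) / real M * \<delta>' \<le> real (L * K) / real M * (\<gamma> / \<sigma>)"
      using \<delta>'\<gamma> by (intro mult_left_mono) auto
    also have "real (L * K) / real M * (\<gamma> / \<sigma>) = \<beta>"
      unfolding \<gamma>_def using M1 L1 K1 \<sigma>0 by (simp add: field_simps)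
    finally show ?thesis by simp
  qed
  show ?thesis using opt_le[OF code] he unfolding L_def K_def M_def by simp
qed

lemma triv_code:
  assumes "0 \<le> P"
  shows "helped_code n R Rh P s2 (\<lambda>m t i. 0) (\<lambda>y. 0) (\<lambda>z. 0)"
  unfolding helped_code_def using assms set_size_ge1[of n Rh] set_size_ge1[of n R] by auto

lemma triv_err:
  assumes "0 < s2"
  shows "helped_error n R s2 (\<lambda>m t i. 0) (\<lambda>y. 0) (\<lambda>z. 0) \<le> 1"
proof -
  interpret NM: prob_space "noise_measure n s2" by (rule prob_NM[OF assms])
  let ?M = "set_size n R"
  have M1: "1 \<le> ?M" by (rule set_size_ge1)
  have "(\<Sum>m<?M. measure (noise_measure n s2) {z \<in> space (noise_measure n s2). 0 \<noteq> m}) \<le> (\<Sum>m<?M. 1)"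
    by (intro sum_mono NM.prob_le_1)
  then show ?thesis unfolding helped_error_def using M1 by (simp add: field_simps)
qed

lemma opt_bounds:
  assumes "0 < s2" "0 \<le> P"
  shows "0 \<le> opt_helped_error n R Rh P s2" "opt_helped_error n R Rh P s2 \<le> 1"
  using opt_nonneg[OF triv_code[OF assms(2)]] apply simp
  using opt_le[OF triv_code[OF assms(2)]] triv_err[OF assms(1)] by (rule order_trans)

lemma term_ge:
  assumes "0 \<le> x" "x \<le> c" "0 < c"
  shows "ereal (- ln c / real n) \<le> (if x = 0 then \<infinity> else ereal (- ln x / real n))"
proof (cases "x = 0")
  case False
  then have "0 < x" using assms by simp
  then have "ln x \<le> ln c" using assms by simp
  then have "- ln c / real n \<le> - ln x / real n" by (intro divide_right_mono) auto
  then show ?thesis using False by simp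
qed simp

lemma plain_triv:
  assumes "r < 0" "0 \<le> P"
  shows "plain_code n r P (\<lambda>c i. 0) (\<lambda>y. 0)" "plain_error n r s2 (\<lambda>c i. 0) (\<lambda>y. 0) = 0"
proof -
  have "exp (real n * r) \<le> 1" using assms(1) by (simp add: mult_nonneg_nonpos)
  then have "\<lceil>exp (real n * r)\<rceil> = 1" by (intro ceiling_unique) auto
  then have K: "set_size n r = 1" unfolding set_size_def by simp
  show "plain_code n r P (\<lambda>c i. 0) (\<lambda>y. 0)" unfolding plain_code_def K using assms by simp
  show "plain_error n r s2 (\<lambda>c i. 0) (\<lambda>y. 0) = 0" unfolding plain_error_def K by simp
qed

lemma plain_error_nonneg: "0 \<le> plain_error n r s2 f \<psi>"
  unfolding plain_error_def by (intro mult_nonneg_nonneg sum_nonneg) auto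

lemma ratio_le4:
  assumes "0 < Rh" "Rh < R"
  shows "real (set_size n Rh * set_size n (R - Rh)) / real (set_size n R) \<le> 4"
proof -
  have e1: "1 \<le> exp (real n * Rh)" using assms by simp
  have e2: "1 \<le> exp (real n * (R - Rh))" using assms by simp
  have "real (set_size n Rh) \<le> 2 * exp (real n * Rh)" using set_size_lt[of n Rh] e1 by linarith
  moreover have "real (set_size n (R - Rh)) \<le> 2 * exp (real n * (R - Rh))" using set_size_lt[of n "R - Rh"] e2 by linarith
  ultimately have "real (set_size n Rh) * real (set_size n (R - Rh)) \<le> (2 * exp (real n * Rh)) * (2 * exp (real n * (R - Rh)))"
    by (intro mult_mono) auto
  also have "\<dots> = 4 * exp (real n * R)" by (simp add: exp_add[symmetric] algebra_simps)
  also have "\<dots> \<le> 4 * real (set_size n R)" using set_size_ge[of n R] by simp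
  finally have "real (set_size n Rh * set_size n (R - Rh)) \<le> 4 * real (set_size n R)" by simp
  moreover have "0 < real (set_size n R)" using set_size_ge1[of n R] by simp
  ultimately show ?thesis by (simp add: divide_le_eq)
qed

theorem theorem1:
  fixes P s2 Rh R :: real and Ea :: "real \<Rightarrow> real"
  assumes "s2 > 0" and "P > 0" and "Rh > 0"
    and "achievable_exponent P s2 Ea"
  shows "(R < Rh \<longrightarrow> reliability R Rh P s2 = \<infinity>) \<and>
         (Rh < R \<and> R < Rh + awgn_capacity P s2 \<longrightarrow>
            reliability R Rh P s2 \<ge> ereal (Ea (R - Rh))) \<and>
         (R \<ge> Rh + awgn_capacity P s2 \<longrightarrow> reliability R Rh P s2 \<ge> 0)"
proof -
  note s2 = assms(1) and P = assms(2) and Rh = assms(3) and ach = assms(4)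
  define opt where "opt n = opt_helped_error n R Rh P s2" for n
  define a where "a n = (if opt n = 0 then \<infinity> else ereal (- ln (opt n) / real n))" for n
  have rel: "reliability R Rh P s2 = limsup a" unfolding reliability_def a_def opt_def ..
  have opt0: "0 \<le> opt n" and opt1: "opt n \<le> 1" for n
    unfolding opt_def using opt_bounds[OF s2, of P n R Rh] P by auto
  have p1: "reliability R Rh P s2 = \<infinity>" if RRh: "R < Rh"
  proof -
    have oz: "opt n = 0" if n: "0 < n" for n
    proof -
      have r: "R - Rh < 0" using RRh by simp
      have le: "opt n \<le> \<beta>" if \<beta>: "0 < \<beta>" for \<beta>
        using scheme[OF n s2 P plain_triv(1)[OF r, of P n] \<beta>] plain_triv(2)[OF r, of P n s2] P
        unfolding opt_def by simp
      show ?thesis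
      proof (rule ccontr)
        assume "opt n \<noteq> 0"
        then have "0 < opt n" using opt0[of n] by simp
        then have "opt n \<le> opt n / 2" using le[of "opt n / 2"] by simp
        then show False using \<open>0 < opt n\<close> by simp
      qed
    qed
    have ev: "eventually (\<lambda>n. (0::nat) < n) sequentially" by (rule eventually_gt_at_top)
    have "eventually (\<lambda>n. a n = \<infinity>) sequentially"
      using ev by (rule eventually_mono) (simp add: a_def oz)
    then have "a \<longlonglongrightarrow> \<infinity>" by (rule tendsto_eventually)
    then have "limsup a = \<infinity>" by (intro lim_imp_Limsup) simp_all
    then show ?thesis using rel by simp
  qed
  have p2: "ereal (Ea (R - Rh)) \<le> reliability R Rh P s2" if RRh: "Rh < R"
  proof -
    define r where "r = R - Rh"
    have r0: "0 < r" unfolding r_def using RRh by simp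
    obtain \<epsilon> :: "nat \<Rightarrow> real" where \<epsilon>: "\<epsilon> \<longlonglongrightarrow> 0"
      and codes: "\<And>n. \<exists>f \<psi>. plain_code n r P f \<psi> \<and> plain_error n r s2 f \<psi> \<le> exp (- real n * (Ea r - \<epsilon> n))"
      using ach unfolding achievable_exponent_def by blast
    define b where "b n = ereal (Ea r - \<epsilon> n - ln 5 / real n)" for n
    have ab: "b n \<le> a n" if n: "0 < n" for n
    proof -
      obtain f \<psi> where pc: "plain_code n r P f \<psi>" and pe: "plain_error n r s2 f \<psi> \<le> exp (- real n * (Ea r - \<epsilon> n))"
        using codes[of n] by blast
      define \<beta> where "\<beta> = exp (- real n * (Ea r - \<epsilon> n))"
      have \<beta>0: "0 < \<beta>" unfolding \<beta>_def by simp
      have "opt n \<le> real (set_size n Rh * set_size n (R - Rh)) / real (set_size n R) * plain_error n (R - Rh) s2 f \<psi> + \<beta>"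
        unfolding opt_def using scheme[OF n s2 P _ \<beta>0] pc unfolding r_def by simp
      also have "real (set_size n Rh * set_size n (R - Rh)) / real (set_size n R) * plain_error n (R - Rh) s2 f \<psi> \<le> 4 * \<beta>"
      proof -
        have "real (set_size n Rh * set_size n (R - Rh)) / real (set_size n R) * plain_error n (R - Rh) s2 f \<psi>
            \<le> 4 * plain_error n (R - Rh) s2 f \<psi>"
          using ratio_le4[OF Rh RRh, of n] plain_error_nonneg by (intro mult_right_mono) auto
        also have "\<dots> \<le> 4 * \<beta>" using pe unfolding r_def \<beta>_def by simp
        finally show ?thesis .
      qed
      finally have o5: "opt n \<le> 5 * \<beta>" by simp
      have "ereal (- ln (5 * \<beta>) / real n) \<le> a n"
        unfolding a_def using term_ge[OF opt0 o5] \<beta>0 by simp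
      moreover have "- ln (5 * \<beta>) / real n = Ea r - \<epsilon> n - ln 5 / real n"
        unfolding \<beta>_def using n by (simp add: ln_mult field_simps)
      ultimately show ?thesis unfolding b_def by simp
    qed
    have "b \<longlonglongrightarrow> ereal (Ea r - 0 - 0)"
      unfolding b_def by (intro tendsto_intros \<epsilon> lim_const_over_n)
    then have "limsup b = ereal (Ea r)" by (intro lim_imp_Limsup) simp_all
    moreover have "limsup b \<le> limsup a"
    proof (intro Limsup_mono)
      have ev: "eventually (\<lambda>n. (0::nat) < n) sequentially" by (rule eventually_gt_at_top)
      show "eventually (\<lambda>n. b n \<le> a n) sequentially"
        using ev by (rule eventually_mono) (rule ab)
    qed
    ultimately show ?thesis using rel unfolding r_def by simp
  qed
  have p3: "0 \<le> reliability R Rh P s2"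
  proof -
    have "0 \<le> a n" for n
    proof (cases "n = 0")
      case True
      then show ?thesis unfolding a_def by simp
    next
      case False
      have "ereal (- ln 1 / real n) \<le> a n" unfolding a_def by (rule term_ge[OF opt0 opt1]) simp
      then show ?thesis by (simp add: zero_ereal_def)
    qed
    then have "limsup (\<lambda>n. 0) \<le> limsup a" by (intro Limsup_mono) auto
    moreover have "limsup (\<lambda>n. 0 :: ereal) = 0" by (rule Limsup_const) simp
    ultimately show ?thesis using rel by simp
  qed
  show ?thesis using p1 p2 p3 by auto
qed

end
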